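(* Let $(p,q)=(6/5,6)$. Then for every $x \in [0,\pi_{6/5,6}/4]$, \[ \sin_{6/5,6}{(2x)} =\frac{2^{1/6}\sin_{6/5,6}{x}\,\cos_{6/5,6}^{1/5}{x}\left(3+\sqrt{1+32\sin_{6/5,6}^6{x}\, \cos_{6/5,6}^{6/5}{x}}\right)^{1/2}}{\left(1+32\sin_{6/5,6}^6{x}\,\cos_{6/5,6}^{6/5}{x}\right)^{1/4} \left(1+\sqrt{1+32\sin_{6/5,6}^6{x}\,\cos_{6/5,6}^{6/5}{x}}\right)^{1/6}}. \]
   Context: For $1<p,q<\infty$ let $F_{p,q}(x)=\int_0^x (1-t^q)^{-1/p}\,dt$ for $x\in[0,1]$, and $\pi_{p,q}=2F_{p,q}(1)$. The generalized sine $\sin_{p,q}$ is defined on $[0,\pi_{p,q}/2]$ as the inverse function of $F_{p,q}$ (an increasing function onto $[0,1]$), extended to $(\pi_{p,q}/2,\pi_{p,q}]$ by $\sin_{p,q}x=\sin_{p,q}(\pi_{p,q}-x)$, and to all of $\mathbb{R}$ as an odd $2\pi_{p,q}$-periodic function. It is $C^1$, and the generalized cosine is $\cos_{p,q}x := \frac{d}{dx}\sin_{p,q}x$; it satisfies $|\cos_{p,q}x|^p+|\sin_{p,q}x|^q=1$, and $\cos_{p,q}x\ge 0$ on $[0,\pi_{p,q}/2]$. *)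

theory Defs
  imports "HOL-Analysis.Analysis"
begin

definition F_pq :: "real \<Rightarrow> real \<Rightarrow> real \<Rightarrow> real" where
  "F_pq p q x = integral {0..x} (\<lambda>t. (1 - t powr q) powr (- 1 / p))"

definition pi_pq :: "real \<Rightarrow> real \<Rightarrow> real" where
  "pi_pq p q = 2 * F_pq p q 1"

definition sin_pq_base :: "real \<Rightarrow> real \<Rightarrow> real \<Rightarrow> real" where
  "sin_pq_base p q x = (THE y. y \<in> {0..1} \<and> F_pq p q y = x)"

text \<open>On [0, pi]: symmetric about pi/2.\<close>
definition sin_pq_half :: "real \<Rightarrow> real \<Rightarrow> real \<Rightarrow> real" where
  "sin_pq_half p q x = (if x \<le> pi_pq p q / 2 then sin_pq_base p q x
                        else sin_pq_base p q (pi_pq p q - x))"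

text \<open>Odd, 2 pi_{p,q}-periodic extension to all of R.\<close>
definition sin_pq :: "real \<Rightarrow> real \<Rightarrow> real \<Rightarrow> real" where
  "sin_pq p q x =
     (let P = pi_pq p q;
          y = x - 2 * P * of_int \<lfloor>(x + P) / (2 * P)\<rfloor>
      in if 0 \<le> y then sin_pq_half p q y else - sin_pq_half p q (- y))"

definition cos_pq :: "real \<Rightarrow> real \<Rightarrow> real \<Rightarrow> real" where
  "cos_pq p q x = deriv (sin_pq p q) x"

end

theory Submission
  imports Defs
begin


definition fI :: "real \<Rightarrow> real" where
  "fI t = (1 - t powr 6) powr (- 1 / (6/5::real))"

abbreviation FF where "FF \<equiv> F_pq (6/5) 6"

lemma FF_def: "FF x = integral {0..x} fI"
  unfolding F_pq_def fI_def by simp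

lemma fI_eq: "0 \<le> t \<Longrightarrow> fI t = (1 - t^6) powr (-5/6)"
  unfolding fI_def by simp

lemma fI_cont: "b < 1 \<Longrightarrow> continuous_on {0..b} fI"
proof -
  assume b: "b < 1"
  have "continuous_on {0..b} (\<lambda>t. (1 - t^6) powr (-5/6::real))"
  proof (intro continuous_intros)
    show "\<forall>x\<in>{0..b}. 1 - x ^ 6 \<noteq> 0"
    proof
      fix x assume "x \<in> {0..b}"
      then have "x^6 < 1" using b by (simp add: power_less_one_iff)
      then show "1 - x^6 \<noteq> 0" by simp
    qed
  qed
  then show ?thesis by (rule continuous_on_cong[THEN iffD1, rotated 2]) (auto simp: fI_eq)
qed



lemma g_integrable: "(\<lambda>t. (1 - t) powr (-5/6::real)) integrable_on {0..1}"
proof -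
  have "((\<lambda>t. (1 - t) powr (-5/6::real)) has_integral ((\<lambda>t. -6 * (1-t) powr (1/6)) 1 - (\<lambda>t. -6 * (1-t) powr (1/6)) 0)) {0..1}"
  proof (rule fundamental_theorem_of_calculus_interior)
    show "continuous_on {0..1} (\<lambda>t. -6 * (1-t) powr (1/6::real))"
      by (intro continuous_on_mult[OF continuous_on_const] continuous_on_powr' continuous_intros) auto
    show "((\<lambda>t. -6 * (1-t) powr (1/6::real)) has_vector_derivative (1 - x) powr (-5/6)) (at x)"
      if "x \<in> {0<..<1}" for x
    proof -
      have "((\<lambda>t. -6 * (1-t) powr (1/6::real)) has_real_derivative (-6 * ((1/6) * (1-x) powr (1/6 - 1) * (-1)))) (at x)"
      proof -
        have "((\<lambda>t. (1-t) powr (1/6::real)) has_real_derivative ((1/6) * (1-x) powr (1/6 - 1) * (-1))) (at x)"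
          using that by (intro DERIV_chain2[where f="\<lambda>z. z powr (1/6)" and g="\<lambda>t. 1 - t"] has_real_derivative_powr derivative_eq_intros) auto
        from DERIV_cmult[OF this, of "-6"] show ?thesis by simp
      qed
      then show ?thesis by (simp add: has_real_derivative_iff_has_vector_derivative)
    qed
  qed simp
  then show ?thesis by blast
qed

lemma g_integrable': "(\<lambda>t. (1 - t) powr (-5/6::real)) integrable_on {0..<1}"
  by (rule integrable_spike_set[OF g_integrable]; rule negligible_subset[of "{1}"]; auto)

lemma fI_cont': "continuous_on {0..<1} fI"
proof -
  have "continuous_on {0..<1} (\<lambda>t. (1 - t^6) powr (-5/6::real))"
  proof (intro continuous_intros)
    show "\<forall>x\<in>{0..<1}. 1 - x ^ 6 \<noteq> (0::real)"
    proof
      fix x::real assume "x \<in> {0..<1}"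
      then have "x^6 < 1" by (simp add: power_less_one_iff)
      then show "1 - x^6 \<noteq> 0" by simp
    qed
  qed
  then show ?thesis by (rule continuous_on_cong[THEN iffD1, rotated 2]) (auto simp: fI_eq)
qed

lemma fI_bound: "t \<in> {0..<1} \<Longrightarrow> \<bar>fI t\<bar> \<le> (1 - t) powr (-5/6)"
proof -
  assume t: "t \<in> {0..<1}"
  have "t^6 \<le> t" using t by (simp add: power_le_one_iff power_decreasing[of 1 6 t, simplified])
  then have "1 - t \<le> 1 - t^6" by simp
  moreover have "0 < 1 - t" using t by simp
  ultimately have "(1 - t^6) powr (-5/6) \<le> (1 - t) powr (-5/6::real)"
    by (intro powr_mono2') auto
  then show ?thesis using t by (simp add: fI_eq)
qed

lemma fI_integrable': "fI integrable_on {0..<1}"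
proof (rule measurable_bounded_by_integrable_imp_integrable_real[OF _ g_integrable'])
  show "fI \<in> borel_measurable (lebesgue_on {0..<1})"
    by (auto intro!: continuous_imp_measurable_on_sets_lebesgue fI_cont')
  show "\<And>x. x \<in> {0..<1} \<Longrightarrow> \<bar>fI x\<bar> \<le> (1 - x) powr (-5/6)" by (rule fI_bound)
qed auto

lemma fI_integrable: "fI integrable_on {0..1}"
  by (rule integrable_spike_set[OF fI_integrable']; rule negligible_subset[of "{1}"]; auto)



lemma FF0: "FF 0 = 0" by (simp add: FF_def)

lemma FF_cont: "continuous_on {0..1} FF"
  unfolding FF_def by (rule indefinite_integral_continuous_1[OF fI_integrable])

lemma fI_ge1: "0 \<le> t \<Longrightarrow> t < 1 \<Longrightarrow> 1 \<le> fI t"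
proof -
  assume t: "0 \<le> t" "t < 1"
  then have "t^6 < 1" by (simp add: power_less_one_iff)
  moreover have "0 \<le> t^6" using t by simp
  ultimately have "(1::real) powr (-5/6) \<le> (1 - t^6) powr (-5/6)"
    by (intro powr_mono2') auto
  then show ?thesis using t by (simp add: fI_eq)
qed

lemma fI_nonneg: "0 \<le> fI t" by (simp add: fI_def)

lemma FF_diff: "0 \<le> a \<Longrightarrow> a \<le> b \<Longrightarrow> b \<le> 1 \<Longrightarrow> FF b - FF a = integral {a..b} fI"
  unfolding FF_def
  using Henstock_Kurzweil_Integration.integral_combine[where a=0 and c=a and b=b and f=fI] integrable_subinterval_real[OF fI_integrable, of 0 b]
  by auto

lemma FF_mono: "0 \<le> a \<Longrightarrow> a \<le> b \<Longrightarrow> b \<le> 1 \<Longrightarrow> FF a \<le> FF b"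
  using FF_diff[of a b] integral_nonneg[of fI "{a..b}"]
    integrable_subinterval_real[OF fI_integrable, of a b] fI_nonneg by force

lemma FF_incr: "0 \<le> a \<Longrightarrow> a \<le> b \<Longrightarrow> b < 1 \<Longrightarrow> b - a \<le> FF b - FF a"
proof -
  assume ab: "0 \<le> a" "a \<le> b" "b < 1"
  have "integral {a..b} (\<lambda>_. 1::real) \<le> integral {a..b} fI"
    using ab integrable_subinterval_real[OF fI_integrable, of a b]
    by (intro integral_le) (auto intro!: fI_ge1)
  then show ?thesis using FF_diff[of a b] ab by simp
qed

lemma FF_strict: "0 \<le> a \<Longrightarrow> a < b \<Longrightarrow> b \<le> 1 \<Longrightarrow> FF a < FF b"
proof -
  assume ab: "0 \<le> a" "a < b" "b \<le> 1"
  define c where "c = (a + b) / 2"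
  have "c - a \<le> FF c - FF a" using ab by (intro FF_incr) (auto simp: c_def)
  moreover have "FF c \<le> FF b" using ab by (intro FF_mono) (auto simp: c_def)
  moreover have "c - a > 0" using ab by (simp add: c_def)
  ultimately show ?thesis by linarith
qed

lemma FF_inj: "0 \<le> a \<Longrightarrow> a \<le> 1 \<Longrightarrow> 0 \<le> b \<Longrightarrow> b \<le> 1 \<Longrightarrow> FF a = FF b \<Longrightarrow> a = b"
  by (metis FF_strict less_irrefl linorder_neqE_linordered_idom)

lemma FF_pos1: "FF 1 > 0" using FF_strict[of 0 1] FF0 by simp

abbreviation SS where "SS \<equiv> sin_pq_base (6/5) 6"

lemma SS_FF: "0 \<le> y \<Longrightarrow> y \<le> 1 \<Longrightarrow> SS (FF y) = y"
  unfolding sin_pq_base_def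
  by (rule the_equality) (auto intro: FF_inj)

lemma FF_SS: "0 \<le> x \<Longrightarrow> x \<le> FF 1 \<Longrightarrow> SS x \<in> {0..1} \<and> FF (SS x) = x"
proof -
  assume x: "0 \<le> x" "x \<le> FF 1"
  obtain y where y: "0 \<le> y" "y \<le> 1" "FF y = x"
    using IVT'[of FF 0 x 1] FF_cont x FF0 by auto
  then show ?thesis using SS_FF[of y] by auto
qed

abbreviation PP where "PP \<equiv> pi_pq (6/5) 6"

lemma PP_eq: "PP = 2 * FF 1" by (simp add: pi_pq_def)

lemma sin_eq_SS: "0 \<le> z \<Longrightarrow> z \<le> PP / 2 \<Longrightarrow> sin_pq (6/5) 6 z = SS z"
proof -
  assume z: "0 \<le> z" "z \<le> PP / 2"
  have P: "PP > 0" using FF_pos1 PP_eq by simp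
  have "0 \<le> (z + PP) / (2 * PP)" using z P by simp
  moreover have "(z + PP) / (2 * PP) < 1" using z P by (simp add: field_simps)
  ultimately have "\<lfloor>(z + PP) / (2 * PP)\<rfloor> = 0" by (simp add: floor_eq_iff)
  then show ?thesis using z unfolding sin_pq_def sin_pq_half_def Let_def by simp
qed



lemma FF_deriv: "0 < y \<Longrightarrow> y < 1 \<Longrightarrow> (FF has_real_derivative fI y) (at y)"
proof -
  assume y: "0 < y" "y < 1"
  define b where "b = (1 + y) / 2"
  have "(FF has_real_derivative fI y) (at y within {0..b})"
    unfolding FF_def[abs_def]
    using y by (intro integral_has_real_derivative fI_cont) (auto simp: b_def)
  moreover have "at y within {0..b} = at y" using y by (intro at_within_Icc_at) (auto simp: b_def)
  ultimately show ?thesis by simp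
qed

definition rr :: "real \<Rightarrow> real" where "rr y = sqrt (1 + 32 * y^6 * (1 - y^6))"
definition HH :: "real \<Rightarrow> real" where "HH r = (r - 1) * (r + 3)^3 / (16 * r^3)"
definition GG :: "real \<Rightarrow> real" where "GG y = HH (rr y)"
definition gam :: "real \<Rightarrow> real" where "gam y = root 6 (GG y)"

lemma HH_deriv: "r > 0 \<Longrightarrow> (HH has_real_derivative (9 - r^2)^2 / (16 * r^4)) (at r)"
  unfolding HH_def[abs_def]
  apply (rule derivative_eq_intros refl | simp)+
  apply (simp add: field_simps)
  apply algebra
  done

lemma rr_deriv: "1 + 32 * y^6 * (1 - y^6) > 0 \<Longrightarrow> (rr has_real_derivative 96 * y^5 * (1 - 2*y^6) / rr y) (at y)"
  unfolding rr_def[abs_def]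
  apply (rule derivative_eq_intros refl | simp)+
  apply (simp add: field_simps)
  done

lemma HH_id: "r > 0 \<Longrightarrow> HH r * (1 - HH r) = ((r^2-1)/32) * (4*(9-r^2)/(8*r^2))^3"
  unfolding HH_def by (simp add: field_simps) algebra

lemma one_minus_HH: "r > 0 \<Longrightarrow> 1 - HH r = (3 - r)^3 * (r + 1) / (16 * r^3)"
  unfolding HH_def by (simp add: field_simps) algebra

lemma uu_bound: "(u::real) * (1 - u) \<le> 1/4"
proof -
  have "0 \<le> (2*u - 1)^2" by simp
  then show ?thesis by (simp add: power2_eq_square algebra_simps)
qed

lemma uu_strict: "(u::real) < 1/2 \<Longrightarrow> u * (1 - u) < 1/4"
proof -
  assume "u < 1/2"
  then have "0 < (2*u - 1)^2" by simp
  then show ?thesis by (simp add: power2_eq_square algebra_simps)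
qed

lemma rr_sq: "0 \<le> y^6 \<Longrightarrow> y^6 \<le> 1 \<Longrightarrow> (rr y)^2 = 1 + 32 * y^6 * (1 - y^6)"
  unfolding rr_def by (simp add: mult_nonneg_nonneg)

lemma rr_ge1: "0 \<le> y^6 \<Longrightarrow> y^6 \<le> 1 \<Longrightarrow> 1 \<le> rr y"
  unfolding rr_def by (simp add: mult_nonneg_nonneg)

lemma rr_le3: "rr y \<le> 3"
proof -
  have "1 + 32 * y^6 * (1 - y^6) \<le> 9" using uu_bound[of "y^6"] by linarith
  then have "rr y \<le> sqrt 9" unfolding rr_def by (rule real_sqrt_le_mono)
  then show ?thesis by simp
qed

lemma rr_lt3: "y^6 < 1/2 \<Longrightarrow> rr y < 3"
proof -
  assume "y^6 < 1/2"
  then have "1 + 32 * y^6 * (1 - y^6) < 9" using uu_strict[of "y^6"] by linarith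
  then have "rr y < sqrt 9" unfolding rr_def by (rule real_sqrt_less_mono)
  then show ?thesis by simp
qed

lemma rr_gt1: "0 < y^6 \<Longrightarrow> y^6 < 1 \<Longrightarrow> 1 < rr y"
proof -
  assume "0 < y^6" "y^6 < 1"
  then have "1 < 1 + 32 * y^6 * (1 - y^6)" by simp
  then have "sqrt 1 < rr y" unfolding rr_def by (rule real_sqrt_less_mono)
  then show ?thesis by simp
qed

lemma rr_half: "y^6 = 1/2 \<Longrightarrow> rr y = 3"
proof -
  assume "y^6 = 1/2"
  then have eq: "1 + 32 * y^6 * (1 - y^6) = 3^2" by (simp only:) simp
  show ?thesis unfolding rr_def eq by simp
qed

lemma HH_nonneg: "1 \<le> r \<Longrightarrow> 0 \<le> HH r"
  unfolding HH_def by simp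

lemma HH_le1: "1 \<le> r \<Longrightarrow> r \<le> 3 \<Longrightarrow> HH r \<le> 1"
proof -
  assume r: "1 \<le> r" "r \<le> 3"
  have "0 \<le> (3 - r)^3 * (r + 1) / (16 * r^3)" using r by simp
  then show ?thesis using one_minus_HH[of r] r by linarith
qed

lemma HH_pos: "1 < r \<Longrightarrow> 0 < HH r"
  unfolding HH_def by simp

lemma HH_lt1: "1 \<le> r \<Longrightarrow> r < 3 \<Longrightarrow> HH r < 1"
proof -
  assume r: "1 \<le> r" "r < 3"
  have "0 < (3 - r)^3 * (r + 1) / (16 * r^3)" using r by simp
  then show ?thesis using one_minus_HH[of r] r by linarith
qed

lemma HH_3: "HH 3 = 1" unfolding HH_def by simp
lemma HH_1: "HH 1 = 0" unfolding HH_def by simp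



lemma pow6_powr: "(z::real) > 0 \<Longrightarrow> (z^6) powr (-5/6) = 1 / z^5"
proof -
  assume z: "z > 0"
  have "(z^6) powr (-5/6) = (z powr 6) powr (-5/6)" using z by simp
  also have "\<dots> = z powr (-5)" by (simp add: powr_powr)
  also have "\<dots> = 1 / z powr 5" by (simp add: powr_minus divide_inverse)
  also have "\<dots> = 1 / z^5" using z by simp
  finally show ?thesis .
qed

lemma aux1: "(a::real) * (inverse (real 6 * b) * g) = a / b * g / 6"
  by (cases "b = 0") (simp_all add: field_simps)

lemma aux2: "0 < (y::real) \<Longrightarrow> 0 < w \<Longrightarrow> 0 < r \<Longrightarrow> A / (y * (2 * w / r))^5 * (384 * y^5 * w^5 / r^5) / 6 = 2 * A"
  by (simp add: field_simps power_mult_distrib power_divide)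

lemma Phi_deriv:
  assumes y: "0 < y" "y^6 < 1/2"
  shows "((\<lambda>y. FF (gam y) - 2 * FF y) has_real_derivative 0) (at y)"
proof -
  define u where "u = y^6"
  define r where "r = rr y"
  define w where "w = 1 - 2*u"
  define G where "G = GG y"
  define k where "k = 2 * w / r"
  have u: "0 < u" "u < 1/2" using y by (auto simp: u_def)
  have r: "1 < r" "r < 3" using u y rr_gt1[of y] rr_lt3[of y] by (auto simp: r_def u_def)
  have r2: "r^2 = 1 + 32 * u * (1 - u)" using u rr_sq[of y] by (simp add: r_def u_def)
  have G: "0 < G" "G < 1" using r HH_pos HH_lt1 by (auto simp: G_def GG_def r_def)
  have w: "0 < w" using u by (simp add: w_def)
  have k: "0 < k" using w r by (simp add: k_def)
  have y1: "y < 1"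
  proof (rule ccontr)
    assume "\<not> y < 1" then have "1 \<le> y^6" by simp
    then show False using y by simp
  qed
  have w2: "9 - r^2 = 8 * w^2" unfolding r2 w_def by (simp add: power2_eq_square algebra_simps)
  define G' where "G' = (9 - r^2)^2 / (16 * r^4) * (96 * y^5 * (1 - 2*y^6) / r)"
  have dG: "(GG has_real_derivative G') (at y)"
    unfolding GG_def[abs_def] G'_def r_def
    using r by (intro DERIV_chain2[OF HH_deriv rr_deriv]) (auto simp: r_def rr_def mult_nonneg_nonneg)
  have gam_eq: "gam y = root 6 G" by (simp add: gam_def G_def)
  have dgam: "(gam has_real_derivative inverse (real 6 * root 6 G ^ (6 - Suc 0)) * G') (at y)"
    unfolding gam_def[abs_def] G_def
    using G by (intro DERIV_chain2[OF DERIV_real_root dG]) (auto simp: G_def)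
  have gr: "0 < root 6 G" "root 6 G < 1" using G by auto
  have dFg: "((\<lambda>y. FF (gam y)) has_real_derivative fI (gam y) * (inverse (real 6 * root 6 G ^ (6 - Suc 0)) * G')) (at y)"
    using gr gam_eq by (intro DERIV_chain2[OF FF_deriv dgam]) auto
  have dPhi: "((\<lambda>y. FF (gam y) - 2 * FF y) has_real_derivative
     fI (gam y) * (inverse (real 6 * root 6 G ^ (6 - Suc 0)) * G') - 2 * fI y) (at y)"
    using y y1 by (intro DERIV_diff[OF dFg] DERIV_cmult FF_deriv) auto
  have wy: "1 - 2*y^6 = w" by (simp add: w_def u_def)
  have G'_eq: "G' = 384 * y^5 * w^5 / r^5"
    unfolding G'_def w2 wy using r by (simp add: field_simps power2_eq_square eval_nat_numeral)
  have GG1: "G * (1 - G) = (1 - u) * (y * k)^6"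
  proof -
    have "G * (1 - G) = ((r^2-1)/32) * (4*(9-r^2)/(8*r^2))^3"
      using HH_id[of r] r by (simp add: G_def GG_def r_def)
    also have "\<dots> = u * (1 - u) * ((2 * w / r)^2)^3"
    proof -
      have e1: "(r^2-1)/32 = u*(1-u)" using r2 by simp
      have e2: "4*(9-r^2)/(8*r^2) = (2*w/r)^2" unfolding w2 using r by (simp add: field_simps power2_eq_square)
      show ?thesis unfolding e1 e2 ..
    qed
    also have "\<dots> = u * (1 - u) * (2 * w / r)^6"
      by (simp add: power_mult[symmetric])
    also have "\<dots> = (1 - u) * (y * k)^6"
    proof -
      have "(y*k)^6 = u * (2*w/r)^6" by (simp only: power_mult_distrib u_def k_def)
      then show ?thesis by (simp only: mult_ac)
    qed
    finally show ?thesis .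
  qed
  have rt6: "root 6 G ^ 6 = G" using G by (simp add: real_root_pow_pos2)
  have fIg: "fI (gam y) = (1 - G) powr (-5/6)"
    unfolding gam_eq using fI_eq[of "root 6 G"] gr rt6 by simp
  have rt5: "root 6 G ^ 5 = G powr (5/6)"
  proof -
    have "root 6 G = G powr (1/6)" using G by (simp add: root_powr_inverse)
    then have "root 6 G ^ 5 = G powr (real 5 * (1/6))" using G by (simp only: powr_power)
    then show ?thesis by simp
  qed
  have c: "(1 - G) powr (-5/6) / G powr (5/6) = (1 - u) powr (-5/6) / (y * k)^5"
  proof -
    have "(1 - G) powr (-5/6) / G powr (5/6) = (1 - G) powr (-5/6) * G powr (-5/6)"
    proof -
      have e: "(-5/6::real) = - (5/6)" by simp
      have m: "G powr (-5/6) = inverse (G powr (5/6))" unfolding e by (rule powr_minus)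
      show ?thesis unfolding m by (rule divide_inverse)
    qed
    also have "\<dots> = (G * (1 - G)) powr (-5/6)"
    proof -
      have "(G*(1-G)) powr (-5/6) = G powr (-5/6) * (1-G) powr (-5/6)"
        by (rule powr_mult)
      then show ?thesis by (metis mult.commute)
    qed
    also have "\<dots> = (1 - u) powr (-5/6) * ((y * k)^6) powr (-5/6)"
      unfolding GG1 by (rule powr_mult)
    also have "\<dots> = (1 - u) powr (-5/6) / (y * k)^5"
    proof -
      have yk: "y * k > 0" using y k by simp
      show ?thesis unfolding pow6_powr[OF yk] by (simp only: times_divide_eq_right mult_1_right)
    qed
    finally show ?thesis .
  qed
  have "fI (gam y) * (inverse (real 6 * root 6 G ^ (6 - Suc 0)) * G') = 2 * fI y"
  proof -
    have "fI (gam y) * (inverse (real 6 * root 6 G ^ (6 - Suc 0)) * G')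
        = ((1 - G) powr (-5/6) / G powr (5/6)) * G' / 6"
    proof -
      have n: "(6::nat) - Suc 0 = 5" by simp
      show ?thesis unfolding n rt5 fIg by (rule aux1)
    qed
    also have "\<dots> = (1 - u) powr (-5/6) / (y * k)^5 * (384 * y^5 * w^5 / r^5) / 6"
      unfolding c G'_eq ..
    also have "\<dots> = 2 * (1 - u) powr (-5/6)"
      unfolding k_def by (rule aux2[OF y(1) w]) (use r in linarith)
    also have "\<dots> = 2 * fI y" using y by (simp add: fI_eq u_def)
    finally show ?thesis .
  qed
  then show ?thesis using dPhi by simp
qed



definition y0 :: real where "y0 = root 6 (1/2)"

lemma y0_6: "y0^6 = 1/2" unfolding y0_def by (simp add: real_root_pow_pos2)
lemma y0_pos: "0 < y0" unfolding y0_def by simp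
lemma y0_lt1: "y0 < 1" unfolding y0_def by simp

lemma pow6_le: "0 \<le> y \<Longrightarrow> y \<le> y0 \<Longrightarrow> y^6 \<le> 1/2"
  using power_mono[of y y0 6] y0_6 by simp

lemma pow6_lt: "0 \<le> y \<Longrightarrow> y < y0 \<Longrightarrow> y^6 < 1/2"
  using power_strict_mono[of y y0 6] y0_6 by simp

lemma gam_range: "0 \<le> y \<Longrightarrow> y \<le> y0 \<Longrightarrow> gam y \<in> {0..1}"
proof -
  assume y: "0 \<le> y" "y \<le> y0"
  have u: "0 \<le> y^6" "y^6 \<le> 1" using pow6_le[OF y] y by auto
  have "0 \<le> GG y" "GG y \<le> 1" unfolding GG_def
    using HH_nonneg HH_le1 rr_ge1[OF u] rr_le3 by auto
  then show ?thesis unfolding gam_def by auto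
qed

lemma gam_cont: "continuous_on {0..y0} gam"
proof -
  have "continuous_on {0..y0} (\<lambda>y. HH (rr y))"
    unfolding HH_def rr_def
  proof (intro continuous_intros ballI)
    fix y assume y: "y \<in> {0..y0}"
    have u: "0 \<le> y^6" "y^6 \<le> 1" using pow6_le[of y] y by auto
    have "1 \<le> rr y" by (rule rr_ge1[OF u])
    then show "16 * sqrt (1 + 32 * y ^ 6 * (1 - y ^ 6)) ^ 3 \<noteq> 0" unfolding rr_def by auto
  qed
  then show ?thesis unfolding gam_def[abs_def] GG_def by (intro continuous_intros)
qed

definition Phi :: "real \<Rightarrow> real" where "Phi y = FF (gam y) - 2 * FF y"

lemma Phi_cont: "continuous_on {0..y0} Phi"
proof -
  have "continuous_on {0..y0} (\<lambda>y. FF (gam y))"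
    using gam_range by (intro continuous_on_compose2[OF FF_cont gam_cont]) auto
  moreover have "continuous_on {0..y0} FF"
    using y0_lt1 by (intro continuous_on_subset[OF FF_cont]) auto
  ultimately show ?thesis unfolding Phi_def[abs_def] by (intro continuous_intros)
qed

lemma Phi0: "Phi 0 = 0"
  unfolding Phi_def gam_def GG_def rr_def by (simp add: HH_1 FF0)

lemma Phi_zero: "0 \<le> b \<Longrightarrow> b \<le> y0 \<Longrightarrow> Phi b = 0"
proof -
  assume b: "0 \<le> b" "b \<le> y0"
  show ?thesis
  proof (cases "b = 0")
    case True then show ?thesis using Phi0 by simp
  next
    case False
    then have b0: "0 < b" using b by simp
    have "\<exists>l z. 0 < z \<and> z < b \<and> DERIV Phi z :> l \<and> Phi b - Phi 0 = (b - 0) * l"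
    proof (rule MVT[OF b0])
      show "continuous_on {0..b} Phi" using b by (intro continuous_on_subset[OF Phi_cont]) auto
      fix x assume x: "0 < x" "x < b"
      then have "DERIV Phi x :> 0"
        unfolding Phi_def[abs_def] using b pow6_lt[of x] by (intro Phi_deriv) auto
      then show "Phi differentiable (at x)" unfolding real_differentiable_def by blast
    qed
    then obtain l z where z: "0 < z" "z < b" "DERIV Phi z :> l" "Phi b - Phi 0 = (b - 0) * l" by blast
    have "DERIV Phi z :> 0"
      unfolding Phi_def[abs_def] using z b pow6_lt[of z] by (intro Phi_deriv) auto
    then have "l = 0" using z(3) DERIV_unique by blast
    then show ?thesis using z Phi0 by simp
  qed
qed

lemma FF_gam: "0 \<le> y \<Longrightarrow> y \<le> y0 \<Longrightarrow> FF (gam y) = 2 * FF y"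
  using Phi_zero unfolding Phi_def by fastforce

lemma gam_y0: "gam y0 = 1"
  unfolding gam_def GG_def using rr_half[OF y0_6] HH_3 by simp

lemma FF_y0: "FF 1 = 2 * FF y0"
  using FF_gam[of y0] y0_pos gam_y0 by simp



lemma powr6: "0 < (a::real) \<Longrightarrow> (a powr b)^6 = a powr (6 * b)"
  by (simp add: powr_power)

lemma alg:
  fixes s :: real
  assumes s: "0 < s" "s^6 < 1"
  defines "c \<equiv> (1 - s^6) powr (5/6)"
  shows "gam s = 2 powr (1/6) * s * c powr (1/5)
      * (3 + sqrt (1 + 32 * s ^ 6 * c powr (6/5))) powr (1/2)
    / ((1 + 32 * s ^ 6 * c powr (6/5)) powr (1/4)
      * (1 + sqrt (1 + 32 * s ^ 6 * c powr (6/5))) powr (1/6))"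
proof -
  have u: "0 < 1 - s^6" using s by simp
  have c1: "c powr (1/5) = (1 - s^6) powr (1/6)"
    unfolding c_def powr_powr by simp
  have c2: "c powr (6/5) = 1 - s^6"
    unfolding c_def powr_powr using u by simp
  define D where "D = 1 + 32 * s ^ 6 * (1 - s^6)"
  define r where "r = sqrt D"
  have r_rr: "r = rr s" by (simp add: r_def D_def rr_def)
  have r1: "1 \<le> r" using rr_ge1[of s] s r_rr by simp
  have D: "D = r^2" using u by (simp add: r_def D_def)
  have Dpos: "0 < D" using D r1 by simp
  define R where "R = 2 powr (1/6) * s * (1 - s^6) powr (1/6) * (3 + r) powr (1/2) / (D powr (1/4) * (1 + r) powr (1/6))"
  have goal_eq: "?thesis \<longleftrightarrow> gam s = R"
    unfolding c1 c2 R_def r_def D_def ..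
  have R0: "0 \<le> R" unfolding R_def using s by simp
  have "R^6 = 2 * s^6 * (1 - s^6) * (3 + r)^3 / (r^3 * (1 + r))"
  proof -
    have "R^6 = (2 powr (1/6))^6 * s^6 * ((1 - s^6) powr (1/6))^6 * ((3 + r) powr (1/2))^6
       / ((D powr (1/4))^6 * ((1 + r) powr (1/6))^6)"
      unfolding R_def by (simp only: power_divide power_mult_distrib)
    also have "\<dots> = 2 powr 1 * s^6 * (1 - s^6) powr 1 * (3 + r) powr 3 / (D powr (3/2) * (1 + r) powr 1)"
      using u r1 Dpos by (simp only: powr6) simp
    also have "D powr (3/2) = r^3"
    proof -
      have "D powr (3/2) = (r powr 2) powr (3/2)" using D r1 by simp
      also have "\<dots> = r powr 3" by (simp add: powr_powr)
      also have "\<dots> = r^3" using r1 by simp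
      finally show ?thesis .
    qed
    finally show ?thesis using u r1 by simp
  qed
  also have "\<dots> = HH r"
  proof -
    have e: "2 * s^6 * (1 - s^6) = (r^2 - 1) / 16" using D unfolding D_def by simp
    have "2 * s^6 * (1 - s^6) * (3 + r)^3 / (r^3 * (1 + r)) = (r^2 - 1) / 16 * (3 + r)^3 / (r^3 * (1 + r))"
      unfolding e ..
    also have "\<dots> = HH r"
    proof -
      have r0: "r \<noteq> 0" "1 + r \<noteq> 0" using r1 by auto
      show ?thesis unfolding HH_def using r0 by (simp add: divide_simps) algebra
    qed
    finally show ?thesis .
  qed
  finally have R6: "R^6 = HH r" .
  have "gam s = root 6 (R^6)" unfolding gam_def GG_def R6 r_rr ..
  also have "\<dots> = R" using R0 by (simp add: real_root_power_cancel)
  finally show ?thesis using goal_eq by simp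
qed



lemma cos_eq:
  assumes x: "0 < x" "x < FF 1"
  shows "cos_pq (6/5) 6 x = (1 - (SS x)^6) powr (5/6)"
proof -
  obtain s where s: "s = SS x" by simp
  have sx: "s \<in> {0..1}" "FF s = x" using FF_SS[of x] x s by auto
  have s0: "0 < s" using sx FF0 x by (cases "s = 0") auto
  have s1: "s < 1" using sx x by (cases "s = 1") auto
  have cont: "isCont SS x"
  proof -
    have "isCont SS (FF s)"
      apply (rule isCont_inverse_function2[where a="s/2" and b="(s+1)/2" and f=FF and g=SS and x=s])
      using s0 s1 apply auto[2]
       apply (rule SS_FF) using s0 s1 apply auto[2]
      apply (rule DERIV_isCont[OF FF_deriv]) using s0 s1 apply auto
      done
    then show ?thesis using sx by simp
  qed
  have fpos: "fI s \<noteq> 0" using fI_ge1[of s] s0 s1 by auto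
  have dS: "DERIV SS x :> inverse (fI s)"
  proof (rule DERIV_inverse_function[where f=FF and a=0 and b="FF 1"])
    show "DERIV FF (SS x) :> fI s" using s s0 s1 FF_deriv[of s] by simp
  qed (use x fpos cont FF_SS in auto)
  have dsin: "DERIV (sin_pq (6/5) 6) x :> inverse (fI s)"
  proof (rule has_field_derivative_transform_within_open[OF dS, where S="{0<..<FF 1}"])
    show "x \<in> {0<..<FF 1}" using x by simp
    fix z assume "z \<in> {0<..<FF 1}"
    then show "SS z = sin_pq (6/5) 6 z" using PP_eq by (intro sin_eq_SS[symmetric]) auto
  qed simp
  have "cos_pq (6/5) 6 x = inverse (fI s)"
    unfolding cos_pq_def by (rule DERIV_imp_deriv[OF dsin])
  also have "\<dots> = (1 - s^6) powr (5/6)"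
  proof -
    have e: "(-5/6::real) = - (5/6)" by simp
    have "fI s = inverse ((1 - s^6) powr (5/6))" unfolding fI_eq[OF less_imp_le[OF s0]] e
      by (rule powr_minus)
    then show ?thesis by simp
  qed
  finally show ?thesis using s by simp
qed

theorem theorem1p1:
  fixes x :: real
  assumes "0 \<le> x" and "x \<le> pi_pq (6/5) 6 / 4"
  shows "sin_pq (6/5) 6 (2 * x) =
    (2 powr (1/6) * sin_pq (6/5) 6 x * (cos_pq (6/5) 6 x) powr (1/5)
      * (3 + sqrt (1 + 32 * (sin_pq (6/5) 6 x) ^ 6 * (cos_pq (6/5) 6 x) powr (6/5))) powr (1/2))
    / ((1 + 32 * (sin_pq (6/5) 6 x) ^ 6 * (cos_pq (6/5) 6 x) powr (6/5)) powr (1/4)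
      * (1 + sqrt (1 + 32 * (sin_pq (6/5) 6 x) ^ 6 * (cos_pq (6/5) 6 x) powr (6/5))) powr (1/6))"
proof -
  have x4: "x \<le> FF y0" using assms(2) PP_eq FF_y0 by simp
  have y0F: "FF y0 < FF 1" using FF_strict[of y0 1] y0_pos y0_lt1 by simp
  obtain s where s: "s = SS x" by simp
  have sx: "s \<in> {0..1}" "FF s = x" using FF_SS[of x] assms(1) x4 y0F s by auto
  have sy0: "s \<le> y0"
  proof (rule ccontr)
    assume "\<not> s \<le> y0"
    then have "FF y0 < FF s" using sx y0_pos by (intro FF_strict) auto
    then show False using sx x4 by simp
  qed
  have sin1: "sin_pq (6/5) 6 x = s" using s assms PP_eq x4 y0F by (subst sin_eq_SS) auto
  have g: "gam s \<in> {0..1}" "FF (gam s) = 2 * x" using gam_range[of s] FF_gam[of s] sx sy0 by auto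
  have sin2: "sin_pq (6/5) 6 (2 * x) = gam s"
  proof -
    have "sin_pq (6/5) 6 (2 * x) = SS (2 * x)" using assms PP_eq by (subst sin_eq_SS) auto
    also have "\<dots> = gam s" using g SS_FF[of "gam s"] by simp
    finally show ?thesis .
  qed
  show ?thesis
  proof (cases "x = 0")
    case True
    then have "s = 0" using sx FF0 SS_FF[of 0] s by simp
    then show ?thesis using sin1 sin2 True by (simp add: gam_def GG_def rr_def HH_1)
  next
    case False
    then have x0: "0 < x" using assms by simp
    have s0: "0 < s" using sx FF0 x0 by (cases "s = 0") auto
    have s6: "s^6 < 1" using sy0 y0_lt1 s0 by (simp add: power_less_one_iff)
    have cos1: "cos_pq (6/5) 6 x = (1 - s^6) powr (5/6)"
      using cos_eq[of x] x0 x4 y0F s by simp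
    show ?thesis unfolding sin1 sin2 cos1 by (rule alg[OF s0 s6])
  qed
qed

end
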